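(* Let $K$ be a valued field, $d\ge 1$, and $Y\subseteq K^d$ finite and nonempty. Then there is $Y_0\subseteq Y$ with $|Y_0|\le d+1$ and $\operatorname{conv}(Y_0)=\operatorname{conv}(Y)$.
   Context: $K$ is a field with a valuation $\nu:K\to\Gamma\cup\{\infty\}$ and valuation ring $\mathcal{O}=\{x:\nu(x)\ge 0\}$. For $Y\subseteq K^d$, $\operatorname{conv}(Y)=\{\sum_{i=1}^n\alpha_iy_i: n\ge1, y_i\in Y,\alpha_i\in\mathcal{O},\sum_i\alpha_i=1\}$. *)

theory Defs
  imports "HOL-Analysis.Finite_Cartesian_Product"
begin

text \<open>We encode the value set \<open>\<Gamma> \<union> {\<infinity>}\<close> as \<open>'g option\<close>, with \<open>None\<close> playing the role of \<open>\<infinity>\<close>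
  (the value of 0 only).\<close>

fun le_inf :: "'g::linorder option \<Rightarrow> 'g option \<Rightarrow> bool" where
  "le_inf _ None = True"
| "le_inf None (Some _) = False"
| "le_inf (Some a) (Some b) = (a \<le> b)"

fun plus_inf :: "'g::plus option \<Rightarrow> 'g option \<Rightarrow> 'g option" where
  "plus_inf (Some a) (Some b) = Some (a + b)"
| "plus_inf _ _ = None"

definition is_valuation :: "('k::field \<Rightarrow> 'g::linordered_ab_group_add option) \<Rightarrow> bool" where
  "is_valuation \<nu> \<longleftrightarrow>
     (\<forall>x. \<nu> x = None \<longleftrightarrow> x = 0) \<and>
     (\<forall>x y. \<nu> (x * y) = plus_inf (\<nu> x) (\<nu> y)) \<and>
     (\<forall>x y. le_inf (\<nu> x) (\<nu> (x + y)) \<or> le_inf (\<nu> y) (\<nu> (x + y)))"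

definition val_ring :: "('k::field \<Rightarrow> 'g::linordered_ab_group_add option) \<Rightarrow> 'k set" where
  "val_ring \<nu> = {x. le_inf (Some 0) (\<nu> x)}"

definition vconv :: "('k::field \<Rightarrow> 'g::linordered_ab_group_add option) \<Rightarrow> ('k^'n) set \<Rightarrow> ('k^'n) set" where
  "vconv \<nu> Y = {x. \<exists>(n::nat) y \<alpha>. n \<ge> 1 \<and>
      (\<forall>i<n. y i \<in> Y) \<and> (\<forall>i<n. \<alpha> i \<in> val_ring \<nu>) \<and> (\<Sum>i<n. \<alpha> i) = 1 \<and>
      x = vec_lambda (\<lambda>c. \<Sum>i<n. \<alpha> i * vec_nth (y i) c)}"

end

theory Submission
  imports Defs
begin

lemma le_inf_trans: "le_inf a b \<Longrightarrow> le_inf b c \<Longrightarrow> le_inf a c"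
  by (cases a; cases b; cases c) auto

locale valu =
  fixes \<nu> :: "'k::field \<Rightarrow> 'g::linordered_ab_group_add option"
  assumes val: "is_valuation \<nu>"
begin

abbreviation "VR \<equiv> val_ring \<nu>"

lemma v0: "\<nu> x = None \<longleftrightarrow> x = 0" using val unfolding is_valuation_def by simp
lemma vmul: "\<nu> (x * y) = plus_inf (\<nu> x) (\<nu> y)" using val unfolding is_valuation_def by blast
lemma vadd: "le_inf (\<nu> x) (\<nu> (x + y)) \<or> le_inf (\<nu> y) (\<nu> (x + y))"
  using val unfolding is_valuation_def by blast

lemma v1: "\<nu> 1 = Some 0"
proof -
  obtain g where g: "\<nu> 1 = Some g" using v0[of 1] by (cases "\<nu> 1") auto
  have "\<nu> (1*1) = Some (g+g)" using vmul[of 1 1] g by simp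
  then have "g + g = g" using g by simp
  then have "g = 0" by (metis add_cancel_right_right)
  then show ?thesis using g by simp
qed

lemma vm1: "\<nu> (-1) = Some 0"
proof -
  obtain g where g: "\<nu> (-1) = Some g" using v0[of "-1"] by (cases "\<nu> (-1)") auto
  have "\<nu> ((-1)*(-1)) = Some (g+g)" using vmul[of "-1" "-1"] g by simp
  then have "g + g = 0" using v1 by simp
  then show ?thesis using g by simp
qed

lemma O_0: "0 \<in> VR" using v0[of 0] by (simp add: val_ring_def)
lemma O_1: "1 \<in> VR" using v1 by (simp add: val_ring_def)

lemma O_mul: "a \<in> VR \<Longrightarrow> b \<in> VR \<Longrightarrow> a * b \<in> VR"
  unfolding val_ring_def using vmul[of a b]
  by (cases "\<nu> a"; cases "\<nu> b") auto

lemma O_add: "a \<in> VR \<Longrightarrow> b \<in> VR \<Longrightarrow> a + b \<in> VR"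
  unfolding val_ring_def using vadd[of a b] le_inf_trans by blast

lemma O_neg: "a \<in> VR \<Longrightarrow> - a \<in> VR"
  using O_mul[of "-1" a] vm1 by (simp add: val_ring_def)

lemma O_diff: "a \<in> VR \<Longrightarrow> b \<in> VR \<Longrightarrow> a - b \<in> VR"
  using O_add[of a "-b"] O_neg by simp

lemma O_sum: "(\<And>i. i \<in> A \<Longrightarrow> f i \<in> VR) \<Longrightarrow> sum f A \<in> VR"
  by (induction A rule: infinite_finite_induct) (auto intro: O_add O_0)

lemma O_div:
  assumes "a \<noteq> 0" "b \<noteq> 0" "\<nu> a = Some p" "\<nu> b = Some q" "p \<le> q"
  shows "b / a \<in> VR"
proof -
  obtain r where r: "\<nu> (b/a) = Some r" using v0[of "b/a"] assms by (cases "\<nu> (b/a)") auto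
  have "b = a * (b/a)" using assms by simp
  then have "\<nu> b = plus_inf (\<nu> a) (\<nu> (b/a))" using vmul by metis
  then have "q = p + r" using assms r by simp
  then have "0 \<le> r" using assms by simp
  then show ?thesis using r by (simp add: val_ring_def)
qed

inductive_set ospan :: "('k^'n) set \<Rightarrow> ('k^'n) set" for X where
  zero: "0 \<in> ospan X"
| gen: "x \<in> X \<Longrightarrow> x \<in> ospan X"
| add: "x \<in> ospan X \<Longrightarrow> y \<in> ospan X \<Longrightarrow> x + y \<in> ospan X"
| smult: "a \<in> VR \<Longrightarrow> x \<in> ospan X \<Longrightarrow> a *s x \<in> ospan X"

lemma ospan_diff: "x \<in> ospan X \<Longrightarrow> y \<in> ospan X \<Longrightarrow> x - y \<in> ospan X"
proof -
  assume a: "x \<in> ospan X" "y \<in> ospan X"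
  have "(-1) *s y \<in> ospan X" using a O_neg[OF O_1] by (auto intro: ospan.smult)
  moreover have "x - y = x + (-1) *s y" by (simp add: vec_eq_iff)
  ultimately show ?thesis using a by (metis ospan.add)
qed

lemma ospan_sum: "(\<And>i. i \<in> A \<Longrightarrow> f i \<in> ospan X) \<Longrightarrow> sum f A \<in> ospan X"
  by (induction A rule: infinite_finite_induct) (auto intro: ospan.add ospan.zero)

lemma ospan_sub: "z \<in> ospan X \<Longrightarrow> X \<subseteq> ospan Y \<Longrightarrow> z \<in> ospan Y"
  by (induction rule: ospan.induct) (auto intro: ospan.intros)

lemma sum_concat: "(\<Sum>i<n1+n2. f i) = (\<Sum>i<n1. f i) + (\<Sum>i<n2. f (n1+i))" for n1 n2 :: nat
  by (induction n2) (auto simp: add.assoc)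

lemma ospan_rep:
  "z \<in> ospan X \<Longrightarrow> \<exists>n::nat. \<exists>y \<beta>. (\<forall>i<n. y i \<in> X) \<and> (\<forall>i<n. \<beta> i \<in> VR) \<and> z = (\<Sum>i<n. \<beta> i *s y i)"
proof (induction rule: ospan.induct)
  case zero
  then show ?case by (intro exI[of _ "0::nat"]) simp
next
  case (gen x)
  then show ?case by (intro exI[of _ 1] exI[of _ "\<lambda>_. x"] exI[of _ "\<lambda>_. 1"]) (simp add: O_1)
next
  case (add x y)
  then obtain n1 y1 b1 n2 y2 b2 where
    1: "\<forall>i<(n1::nat). y1 i \<in> X" "\<forall>i<n1. b1 i \<in> VR" "x = (\<Sum>i<n1. b1 i *s y1 i)" and
    2: "\<forall>i<(n2::nat). y2 i \<in> X" "\<forall>i<n2. b2 i \<in> VR" "y = (\<Sum>i<n2. b2 i *s y2 i)" by blast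
  define yy where "yy i = (if i < n1 then y1 i else y2 (i - n1))" for i
  define bb where "bb i = (if i < n1 then b1 i else b2 (i - n1))" for i
  have "(\<Sum>i<n1+n2. bb i *s yy i) = (\<Sum>i<n1. bb i *s yy i) + (\<Sum>i<n2. bb (n1+i) *s yy (n1+i))"
    by (rule sum_concat)
  also have "\<dots> = x + y"
  proof -
    have "(\<Sum>i<n1. bb i *s yy i) = x" unfolding 1(3)
      by (intro sum.cong) (auto simp: yy_def bb_def)
    moreover have "(\<Sum>i<n2. bb (n1+i) *s yy (n1+i)) = y" unfolding 2(3)
      by (intro sum.cong) (auto simp: yy_def bb_def)
    ultimately show ?thesis by simp
  qed
  finally have "x + y = (\<Sum>i<n1+n2. bb i *s yy i)" by (rule sym)
  moreover have "\<forall>i<n1+n2. yy i \<in> X" "\<forall>i<n1+n2. bb i \<in> VR"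
    using 1(1,2) 2(1,2) by (auto simp: yy_def bb_def)
  ultimately show ?case by blast
next
  case (smult a x)
  then obtain n y \<beta> where 1: "\<forall>i<(n::nat). y i \<in> X" "\<forall>i<n. \<beta> i \<in> VR" "x = (\<Sum>i<n. \<beta> i *s y i)" by blast
  have "a *s x = (\<Sum>i<n. (a * \<beta> i) *s y i)"
  proof -
    have "(a *s x) $ c = (\<Sum>i<n. (a * \<beta> i) *s y i) $ c" for c
      unfolding 1(3) vector_smult_component sum_component
      by (simp add: sum_distrib_left mult.assoc)
    then show ?thesis by (simp add: vec_eq_iff)
  qed
  moreover have "\<forall>i<n. a * \<beta> i \<in> VR" using 1(2) smult(1) by (simp add: O_mul)
  ultimately show ?case using 1(1)
    by (intro exI[of _ n] exI[of _ y] exI[of _ "\<lambda>i. a * \<beta> i"]) simp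
qed

lemma main:
  "finite W \<Longrightarrow> (\<forall>w\<in>W. \<forall>c. c \<notin> C \<longrightarrow> w $ c = 0) \<Longrightarrow> card (C :: 'n::finite set) = n \<Longrightarrow>
   \<exists>W0\<subseteq>W. card W0 \<le> n \<and> W \<subseteq> ospan (W0 :: ('k^'n) set)"
proof (induction n arbitrary: C W)
  case 0
  then have "C = {}" by simp
  then have "\<forall>w\<in>W. w = 0" using 0 by (simp add: vec_eq_iff)
  then show ?case by (intro exI[of _ "{}"]) (auto intro: ospan.zero)
next
  case (Suc n)
  define S where "S = {p. fst p \<in> W \<and> snd p \<in> C \<and> fst p $ snd p \<noteq> 0}"
  show ?case
  proof (cases "S = {}")
    case True
    then have "\<forall>w\<in>W. w = 0" using Suc.prems(2) by (auto simp: vec_eq_iff S_def)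
    then show ?thesis by (intro exI[of _ "{}"]) (auto intro: ospan.zero)
  next
    case False
    have finS: "finite S"
      by (rule finite_subset[of _ "W \<times> UNIV"]) (auto simp: S_def Suc.prems(1))
    define key where "key p = the (\<nu> (fst p $ snd p))" for p :: "('k^'n) \<times> 'n"
    define m where "m = Min (key ` S)"
    have "m \<in> key ` S" unfolding m_def using finS False by (intro Min_in) auto
    then obtain p where pS: "p \<in> S" and pm: "key p = m" by blast
    have pmin: "\<And>q. q \<in> S \<Longrightarrow> key p \<le> key q" unfolding pm m_def using finS by auto
    obtain v c0 where p: "p = (v, c0)" by (cases p)
    have vW: "v \<in> W" and c0C: "c0 \<in> C" and vc0: "v $ c0 \<noteq> 0" using pS p by (auto simp: S_def)
    have coefO: "w $ c / v $ c0 \<in> VR" if "w \<in> W" "c \<in> C" for w c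
    proof (cases "w $ c = 0")
      case True then show ?thesis using O_0 by simp
    next
      case False
      have qS: "(w, c) \<in> S" using that False by (simp add: S_def)
      obtain a where a: "\<nu> (v $ c0) = Some a" using v0 vc0 by (cases "\<nu> (v $ c0)") auto
      obtain b where b: "\<nu> (w $ c) = Some b" using v0 False by (cases "\<nu> (w $ c)") auto
      have "a \<le> b" using pmin[OF qS] a b p by (simp add: key_def)
      then show ?thesis using O_div[OF vc0 False a b] by simp
    qed
    define g where "g w = w - (w $ c0 / v $ c0) *s v" for w
    define C' where "C' = C - {c0}"
    have cardC': "card C' = n" using Suc.prems(3) c0C by (simp add: C'_def)
    have van: "\<forall>u\<in>g ` W. \<forall>c. c \<notin> C' \<longrightarrow> u $ c = 0"
    proof (intro ballI allI impI)
      fix u c assume u: "u \<in> g ` W" and c: "c \<notin> C'"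
      then obtain w where w: "w \<in> W" "u = g w" by blast
      show "u $ c = 0"
      proof (cases "c = c0")
        case True then show ?thesis using w vc0 by (simp add: g_def)
      next
        case False
        then have "c \<notin> C" using c by (simp add: C'_def)
        then show ?thesis using w Suc.prems(2) vW by (simp add: g_def)
      qed
    qed
    obtain W0' where W0': "W0' \<subseteq> g ` W" "card W0' \<le> n" "g ` W \<subseteq> ospan W0'"
      using Suc.IH[OF _ van cardC'] Suc.prems(1) by blast
    define s where "s u = (SOME w. w \<in> W \<and> g w = u)" for u
    have s: "s u \<in> W \<and> g (s u) = u" if "u \<in> W0'" for u
    proof -
      have "\<exists>w. w \<in> W \<and> g w = u" using W0'(1) that by auto
      then show ?thesis unfolding s_def by (rule someI_ex)
    qed
    define W0 where "W0 = insert v (s ` W0')"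
    have finW0': "finite W0'" using finite_subset[OF W0'(1)] Suc.prems(1) by simp
    have sub: "W0 \<subseteq> W" using s vW by (auto simp: W0_def)
    have "card W0 \<le> Suc (card (s ` W0'))" unfolding W0_def using finW0'
      by (simp add: card_insert_if)
    also have "\<dots> \<le> Suc n" using card_image_le[OF finW0', of s] W0'(2) by simp
    finally have cardW0: "card W0 \<le> Suc n" .
    have vsp: "v \<in> ospan W0" by (auto simp: W0_def intro: ospan.gen)
    have W0'sp: "W0' \<subseteq> ospan W0"
    proof
      fix u assume u: "u \<in> W0'"
      have su: "s u \<in> ospan W0" using u by (auto simp: W0_def intro: ospan.gen)
      have "(s u $ c0 / v $ c0) *s v \<in> ospan W0"
        using coefO[of "s u" c0] s[OF u] c0C vsp by (auto intro: ospan.smult)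
      then have "g (s u) \<in> ospan W0" unfolding g_def using su by (rule ospan_diff[rotated])
      then show "u \<in> ospan W0" using s[OF u] by simp
    qed
    have "W \<subseteq> ospan W0"
    proof
      fix w assume w: "w \<in> W"
      have "g w \<in> ospan W0" using W0'(3) w ospan_sub[OF _ W0'sp] by blast
      moreover have "(w $ c0 / v $ c0) *s v \<in> ospan W0"
        using coefO[OF w c0C] vsp by (auto intro: ospan.smult)
      ultimately have "g w + (w $ c0 / v $ c0) *s v \<in> ospan W0" by (rule ospan.add)
      then show "w \<in> ospan W0" by (simp add: g_def)
    qed
    then show ?thesis using sub cardW0 by blast
  qed
qed

end

theorem corollary2p8:
  fixes \<nu> :: "'k::field \<Rightarrow> 'g::linordered_ab_group_add option"
    and Y :: "('k^'n) set"
  assumes "is_valuation \<nu>"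
    and "finite Y" and "Y \<noteq> {}"
  shows "\<exists>Y0 \<subseteq> Y. card Y0 \<le> CARD('n) + 1 \<and> vconv \<nu> Y0 = vconv \<nu> Y"
proof -
  interpret valu \<nu> by (rule valu.intro) (rule assms(1))
  obtain y0 where y0: "y0 \<in> Y" using assms(3) by blast
  define D where "D = (\<lambda>y. y - y0) ` Y"
  obtain D0 where D0: "D0 \<subseteq> D" "card D0 \<le> CARD('n)" "D \<subseteq> ospan D0"
    using main[of D UNIV "CARD('n)"] assms(2) by (auto simp: D_def)
  define Y0 where "Y0 = insert y0 ((\<lambda>u. u + y0) ` D0)"
  have finD0: "finite D0" using D0(1) assms(2) finite_subset unfolding D_def by blast
  have Y0Y: "Y0 \<subseteq> Y" using D0(1) y0 by (auto simp: Y0_def D_def)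
  have "card Y0 \<le> Suc (card ((\<lambda>u. u + y0) ` D0))" unfolding Y0_def using finD0
    by (simp add: card_insert_if)
  also have "\<dots> \<le> CARD('n) + 1" using card_image_le[OF finD0, of "\<lambda>u. u + y0"] D0(2) by simp
  finally have cardY0: "card Y0 \<le> CARD('n) + 1" .
  have "vconv \<nu> Y0 \<subseteq> vconv \<nu> Y" using Y0Y unfolding vconv_def by blast
  moreover have "vconv \<nu> Y \<subseteq> vconv \<nu> Y0"
  proof
    fix x assume "x \<in> vconv \<nu> Y"
    then obtain n :: nat and y \<alpha> where n: "n \<ge> 1" "\<forall>i<n. y i \<in> Y" "\<forall>i<n. \<alpha> i \<in> VR"
      "(\<Sum>i<n. \<alpha> i) = 1" "x = vec_lambda (\<lambda>c. \<Sum>i<n. \<alpha> i * vec_nth (y i) c)"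
      unfolding vconv_def by blast
    have "x - y0 = (\<Sum>i<n. \<alpha> i *s (y i - y0))"
    proof -
      have "x $ c - y0 $ c = (\<Sum>i<n. \<alpha> i * (y i $ c - y0 $ c))" for c
        using n(4,5) by (simp add: right_diff_distrib sum_subtractf flip: sum_distrib_right)
      then show ?thesis by (simp add: vec_eq_iff)
    qed
    moreover have "(\<Sum>i<n. \<alpha> i *s (y i - y0)) \<in> ospan D0"
    proof (rule ospan_sum)
      fix i assume "i \<in> {..<n}"
      then have "y i - y0 \<in> ospan D0" "\<alpha> i \<in> VR" using n(2,3) D0(3) by (auto simp: D_def)
      then show "\<alpha> i *s (y i - y0) \<in> ospan D0" by (auto intro: ospan.smult)
    qed
    ultimately have "x - y0 \<in> ospan D0" by simp
    then obtain m u \<beta> where m: "\<forall>i<(m::nat). u i \<in> D0" "\<forall>i<m. \<beta> i \<in> VR" "x - y0 = (\<Sum>i<m. \<beta> i *s u i)"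
      using ospan_rep by blast
    define yy where "yy i = (if i < m then u i + y0 else y0)" for i
    define aa where "aa i = (if i < m then \<beta> i else 1 - (\<Sum>j<m. \<beta> j))" for i
    have 1: "\<forall>i<Suc m. yy i \<in> Y0" using m(1) by (auto simp: yy_def Y0_def)
    have 2: "\<forall>i<Suc m. aa i \<in> VR" using m(2) by (auto simp: aa_def intro!: O_diff O_1 O_sum)
    have 3: "(\<Sum>i<Suc m. aa i) = 1" by (simp add: aa_def)
    have 4: "x = vec_lambda (\<lambda>c. \<Sum>i<Suc m. aa i * vec_nth (yy i) c)"
    proof -
      have "x $ c = (\<Sum>i<Suc m. aa i * yy i $ c)" for c
      proof -
        have "x $ c = y0 $ c + (\<Sum>i<m. \<beta> i * u i $ c)"
          using arg_cong[OF m(3), of "\<lambda>z. z $ c"] by (simp add: algebra_simps)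
        moreover have "(\<Sum>i<Suc m. aa i * yy i $ c) =
            (\<Sum>i<m. \<beta> i * u i $ c) + (\<Sum>i<m. \<beta> i) * y0 $ c + (1 - (\<Sum>j<m. \<beta> j)) * y0 $ c"
          by (simp add: aa_def yy_def distrib_left sum.distrib sum_distrib_right)
        ultimately show ?thesis by (simp add: algebra_simps)
      qed
      then show ?thesis by (simp add: vec_eq_iff)
    qed
    show "x \<in> vconv \<nu> Y0" unfolding vconv_def using 1 2 3 4
      by (intro CollectI exI[of _ "Suc m"] exI[of _ yy] exI[of _ aa]) simp
  qed
  ultimately show ?thesis using Y0Y cardY0 by blast
qed

end
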